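(* Let $d\ge 1$, let $s$ be an integer with $1<s<2^d$, write $s=j\cdot 2^k$ with $j$ odd and $k\ge 0$, and let $n\ge d+1$. Then for every $A\subseteq\mathbb{F}_2^n$, \[\lambda^*(n,d,s,A)\le 1-\frac{2^{d-k}-1}{2^{d+1}-1}.\]
   Context: For integers $n\ge d\ge 1$, a $d$-flat in $\mathbb{F}_2^n$ is a set $x_0+U$ with $x_0\in\mathbb{F}_2^n$ and $U$ a $d$-dimensional linear subspace of $\mathbb{F}_2^n$. For $A\subseteq\mathbb{F}_2^n$ and an integer $0\le s\le 2^d$, $\lambda^*(n,d,s,A)$ denotes the fraction of $d$-flats $Q$ in $\mathbb{F}_2^n$ with $|Q\cap A|=s$. *)

theory Defs
  imports "HOL-Analysis.Analysis" "HOL-Library.Z2"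
begin

text \<open>F_2^n is modelled as the type bit ^ 'n with CARD('n) = n; it is a vector
  space over the field bit via scalar multiplication (*s).\<close>

definition flats :: "nat \<Rightarrow> ((bit ^ 'n) set) set" where
  "flats d = {(\<lambda>u. x0 + u) ` U | x0 U. vec.subspace U \<and> vec.dim U = d}"

definition lambda_star :: "nat \<Rightarrow> nat \<Rightarrow> (bit ^ 'n) set \<Rightarrow> real" where
  "lambda_star d s A =
     real (card {Q \<in> flats d. card (Q \<inter> A) = s}) / real (card (flats d :: ((bit ^ 'n) set) set))"

end

theory Submission
  imports Defs
begin

declare add_bit_eq_xor[simp del]

lemma bit_cases2: "(c::bit) = 0 \<or> c = 1"
  by (metis bit_not_zero_iff)

lemma bit_add_self'[simp]: "(c::bit) + c = 0"
  using bit_cases2[of c] by auto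

lemma bit_add_cancel[simp]: "(c::bit) + (c + d) = d"
  by (simp add: add.assoc[symmetric])

lemma bit_UNIV: "(UNIV::bit set) = {0,1}"
  using bit_cases2 by auto

instance bit :: finite
  by standard (simp add: bit_UNIV)

lemma card_bit: "CARD(bit) = 2"
  by (simp add: bit_UNIV)

lemma finite_vecset[simp,intro]: "finite (A :: (bit^'n) set)"
  by (rule finite_subset[of _ UNIV]) auto

lemma vadd_self[simp]: "(x::bit^'n) + x = 0"
  by (simp add: vec_eq_iff)

lemma vtwo[simp]: "2 * (x::bit^'n) = 0"
  by (simp add: vec_eq_iff)

lemma vtwo'[simp]: "(x::bit^'n) * 2 = 0"
  by (simp add: vec_eq_iff)

lemma vminus_eq_plus: "(x::bit^'n) - y = x + y"
  by (simp add: vec_eq_iff)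

lemma vuminus[simp]: "- (x::bit^'n) = x"
  by (simp add: vec_eq_iff)


lemma vadd_cancel: "(x::bit^'n) + (x + y) = y"
  by (simp add: add.assoc[symmetric])

lemma subspace_bit:
  "vec.subspace (U::(bit^'n) set) \<longleftrightarrow> 0 \<in> U \<and> (\<forall>x\<in>U. \<forall>y\<in>U. x + y \<in> U)"
proof
  assume "vec.subspace U" thus "0 \<in> U \<and> (\<forall>x\<in>U. \<forall>y\<in>U. x + y \<in> U)"
    by (simp add: vec.subspace_def)
next
  assume a: "0 \<in> U \<and> (\<forall>x\<in>U. \<forall>y\<in>U. x + y \<in> U)"
  have "\<forall>c. \<forall>x\<in>U. c *s x \<in> U"
  proof (intro allI ballI)
    fix c :: bit and x assume "x \<in> U"
    then show "c *s x \<in> U" using bit_cases2[of c] a by auto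
  qed
  with a show "vec.subspace U" by (simp add: vec.subspace_def)
qed

lemma span_insert_bit:
  "vec.span (insert v S) = vec.span S \<union> (\<lambda>x. v + x) ` vec.span S" for v :: "bit^'n"
proof -
  have "vec.span (insert v S) = {x. \<exists>k. x - k *s v \<in> vec.span S}" by (rule vec.span_insert)
  also have "\<dots> = vec.span S \<union> (\<lambda>x. v + x) ` vec.span S"
  proof (auto simp: vminus_eq_plus)
    fix x k assume "x + k *s v \<in> vec.span S" "x \<notin> (+) v ` vec.span S"
    then show "x \<in> vec.span S" using bit_cases2[of k]
      by (metis add.commute image_eqI vadd_cancel vector_smult_lid vector_smult_lzero add_0_right)
  next
    fix x assume "x \<in> vec.span S" then show "\<exists>k. x + k *s v \<in> vec.span S"
      by (intro exI[of _ 0]) simp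
  next
    fix x assume "x \<in> vec.span S" then show "\<exists>k. v + x + k *s v \<in> vec.span S"
    proof (intro exI[of _ 1])
    have "v + x + 1 *s v = x" by (simp add: vec_eq_iff)
    then show "v + x + 1 *s v \<in> vec.span S" using \<open>x \<in> vec.span S\<close> by simp
  qed
  qed
  finally show ?thesis .
qed


definition Fun :: "(bit^'n) set \<Rightarrow> ((bit^'n) \<Rightarrow> bit) set" where
  "Fun U = {\<phi>. (\<forall>x\<in>U. \<forall>y\<in>U. \<phi> (x+y) = \<phi> x + \<phi> y) \<and> (\<forall>x. x \<notin> U \<longrightarrow> \<phi> x = 0)}"

definition ext :: "(bit^'n) set \<Rightarrow> bit^'n \<Rightarrow> (bit^'n \<Rightarrow> bit) \<Rightarrow> bit \<Rightarrow> bit^'n \<Rightarrow> bit" where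
  "ext K v \<psi> c = (\<lambda>x. if x \<in> K then \<psi> x else if x + v \<in> K then c + \<psi> (x + v) else 0)"

definition restr :: "(bit^'n) set \<Rightarrow> (bit^'n \<Rightarrow> bit) \<Rightarrow> bit^'n \<Rightarrow> bit" where
  "restr K \<phi> = (\<lambda>x. if x \<in> K then \<phi> x else 0)"

lemma Fun_zero: "\<phi> \<in> Fun U \<Longrightarrow> vec.subspace U \<Longrightarrow> \<phi> 0 = 0"
proof -
  assume a: "\<phi> \<in> Fun U" "vec.subspace U"
  then have "0 \<in> U" by (simp add: subspace_bit)
  then have "\<phi> (0+0) = \<phi> 0 + \<phi> 0" using a by (simp only: Fun_def mem_Collect_eq)
  then have "\<phi> 0 = \<phi> 0 + \<phi> 0" by simp
  then show ?thesis by simp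
qed

lemma Fun_add: "\<phi> \<in> Fun U \<Longrightarrow> x \<in> U \<Longrightarrow> y \<in> U \<Longrightarrow> \<phi> (x+y) = \<phi> x + \<phi> y"
  by (simp add: Fun_def)

lemma Fun_out: "\<phi> \<in> Fun U \<Longrightarrow> x \<notin> U \<Longrightarrow> \<phi> x = 0"
  by (simp add: Fun_def)

lemma mem_trans_iff: "x \<in> (\<lambda>y. v + y) ` K \<longleftrightarrow> x + v \<in> K" for x v :: "bit^'n"
proof
  assume "x \<in> (\<lambda>y. v + y) ` K" then obtain y where "y \<in> K" "x = v + y" by auto
  then show "x + v \<in> K" by (simp add: add.commute vadd_cancel)
next
  assume "x + v \<in> K" then have "x = v + (x + v)" by (simp add: add.commute vadd_cancel)
  then show "x \<in> (\<lambda>y. v + y) ` K" using \<open>x + v \<in> K\<close> by blast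
qed

locale hsplit =
  fixes K U :: "(bit^'n) set" and v :: "bit^'n"
  assumes K: "vec.subspace K" and vK: "v \<notin> K" and U: "U = K \<union> (\<lambda>x. v + x) ` K"
begin

lemma memU: "x \<in> U \<longleftrightarrow> x \<in> K \<or> x + v \<in> K"
  using U mem_trans_iff by blast

lemma K0: "0 \<in> K" using K by (simp add: subspace_bit)
lemma Kadd: "x \<in> K \<Longrightarrow> y \<in> K \<Longrightarrow> x + y \<in> K" using K by (simp add: subspace_bit)

lemma KsubU: "K \<subseteq> U" using U by auto
lemma vU: "v \<in> U" using memU K0 by simp

lemma not_both: "x \<in> K \<Longrightarrow> x + v \<in> K \<Longrightarrow> False"
  using Kadd[of x "x+v"] vK by (simp add: vadd_cancel)

lemma card_U: "card U = 2 * card K"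
proof -
  have "card U = card K + card ((\<lambda>x. v + x) ` K)"
    unfolding U
  proof (rule card_Un_disjoint)
    show "K \<inter> (+) v ` K = {}" using not_both mem_trans_iff by blast
  qed auto
  also have "card ((\<lambda>x. v + x) ` K) = card K"
    by (rule card_image) (auto simp: inj_on_def)
  finally show ?thesis by simp
qed

lemma subspace_U: "vec.subspace U"
  unfolding subspace_bit
proof (intro conjI ballI)
  show "0 \<in> U" using K0 KsubU by auto
next
  fix x y assume "x \<in> U" "y \<in> U"
  then show "x + y \<in> U" unfolding memU
  proof (elim disjE)
    assume "x \<in> K" "y \<in> K" then show "x + y \<in> K \<or> x + y + v \<in> K" using Kadd by auto
  next
    assume "x \<in> K" "y + v \<in> K" then show "x + y \<in> K \<or> x + y + v \<in> K"
      using Kadd[of x "y+v"] by (simp add: add.assoc)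
  next
    assume "x + v \<in> K" "y \<in> K" then show "x + y \<in> K \<or> x + y + v \<in> K"
      using Kadd[of "x+v" y] by (simp add: ac_simps)
  next
    assume "x + v \<in> K" "y + v \<in> K"
    then have "(x + v) + (y + v) \<in> K" using Kadd by blast
    moreover have "(x + v) + (y + v) = x + y" by (simp add: vec_eq_iff ac_simps)
    ultimately show "x + y \<in> K \<or> x + y + v \<in> K" by simp
  qed
qed

lemma ext_K: "x \<in> K \<Longrightarrow> ext K v \<psi> c x = \<psi> x" by (simp add: ext_def)

lemma ext_nK: "x \<notin> K \<Longrightarrow> x + v \<in> K \<Longrightarrow> ext K v \<psi> c x = c + \<psi> (x + v)" by (simp add: ext_def)

lemma ext_v: "\<psi> \<in> Fun K \<Longrightarrow> ext K v \<psi> c v = c"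
  using vK K0 Fun_zero[OF _ K] by (simp add: ext_def)

lemma ext_Fun: assumes "\<psi> \<in> Fun K" shows "ext K v \<psi> c \<in> Fun U"
  unfolding Fun_def
proof (intro CollectI conjI ballI allI impI)
  fix x assume "x \<notin> U" then show "ext K v \<psi> c x = 0" using memU by (simp add: ext_def)
next
  fix x y assume "x \<in> U" "y \<in> U"
  have ad: "\<And>a b. a \<in> K \<Longrightarrow> b \<in> K \<Longrightarrow> \<psi> (a + b) = \<psi> a + \<psi> b" using assms Fun_add by blast
  show "ext K v \<psi> c (x + y) = ext K v \<psi> c x + ext K v \<psi> c y"
    using \<open>x \<in> U\<close> \<open>y \<in> U\<close> unfolding memU
  proof (elim disjE)
    assume "x \<in> K" "y \<in> K" then show ?thesis using Kadd ad by (simp add: ext_K)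
  next
    assume a: "x \<in> K" "y + v \<in> K"
    have "y \<notin> K" using a not_both by blast
    have "x + y + v \<in> K" using Kadd[of x "y+v"] a by (simp add: add.assoc)
    have "x + y \<notin> K" using Kadd[of x "x+y"] a \<open>y \<notin> K\<close> by (auto simp: vadd_cancel)
    note * = \<open>y \<notin> K\<close> \<open>x + y \<notin> K\<close> \<open>x + y + v \<in> K\<close>
    from * show ?thesis using a ad[of x "y+v"] by (simp add: ext_K ext_nK add.assoc ac_simps)
  next
    assume a: "x + v \<in> K" "y \<in> K"
    have "x \<notin> K" using a not_both by blast
    have "x + y + v = (x + v) + y" by (simp add: ac_simps)
    then have "x + y + v \<in> K" using Kadd[of "x+v" y] a by metis
    have "x + y \<notin> K" using Kadd[of y "x+y"] a \<open>x \<notin> K\<close> by (auto simp: ac_simps vadd_cancel)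
    note * = \<open>x \<notin> K\<close> \<open>x + y \<notin> K\<close> \<open>x + y + v \<in> K\<close>
    from * have "x \<notin> K" "x + y \<notin> K" "x + y + v \<in> K" by auto
    moreover have "x + y + v = (x + v) + y" by (simp add: ac_simps)
    ultimately show ?thesis using a ad[of "x+v" y] by (simp add: ext_K ext_nK ac_simps)
  next
    assume a: "x + v \<in> K" "y + v \<in> K"
    have e: "(x + v) + (y + v) = x + y" by (simp add: vec_eq_iff ac_simps)
    have "x + y \<in> K" using Kadd[OF a] e by simp
    moreover have "x \<notin> K" "y \<notin> K" using a not_both by auto
    ultimately show ?thesis using a ad[OF a] e
      by (simp add: ext_K ext_nK ac_simps)
  qed
qed

lemma restr_Fun: assumes "\<phi> \<in> Fun U" shows "restr K \<phi> \<in> Fun K"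
  unfolding Fun_def restr_def
proof (intro CollectI conjI ballI allI impI)
  fix x y assume "x \<in> K" "y \<in> K"
  then show "(if x + y \<in> K then \<phi> (x + y) else 0) = (if x \<in> K then \<phi> x else 0) + (if y \<in> K then \<phi> y else 0)"
    using Kadd Fun_add[OF assms] KsubU by (auto intro!: Fun_add[OF assms])
qed auto

lemma Fun_ext_eq: assumes "\<phi> \<in> Fun U" shows "ext K v (restr K \<phi>) (\<phi> v) = \<phi>"
proof
  fix x
  show "ext K v (restr K \<phi>) (\<phi> v) x = \<phi> x"
  proof (cases "x \<in> K")
    case True then show ?thesis by (simp add: ext_K restr_def)
  next
    case False
    show ?thesis
    proof (cases "x + v \<in> K")
      case True
      have "\<phi> (v + (x + v)) = \<phi> v + \<phi> (x + v)" using Fun_add[OF assms vU] True KsubU by blast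
      moreover have "v + (x + v) = x" by (simp add: vec_eq_iff ac_simps)
      ultimately show ?thesis using False True by (simp add: ext_nK restr_def)
    next
      case F2: False
      then have "x \<notin> U" using False memU by simp
      then show ?thesis using False F2 Fun_out[OF assms] by (simp add: ext_def)
    qed
  qed
qed

lemma restr_ext: assumes "\<psi> \<in> Fun K" shows "restr K (ext K v \<psi> c) = \<psi>"
proof
  fix x show "restr K (ext K v \<psi> c) x = \<psi> x"
    using Fun_out[OF assms] by (cases "x \<in> K") (simp_all add: restr_def ext_K)
qed

lemma Fun_U_image: "Fun U = (\<lambda>(\<psi>, c). ext K v \<psi> c) ` (Fun K \<times> UNIV)"
proof
  show "Fun U \<subseteq> (\<lambda>(\<psi>, c). ext K v \<psi> c) ` (Fun K \<times> UNIV)"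
  proof
    fix \<phi> assume "\<phi> \<in> Fun U"
    then show "\<phi> \<in> (\<lambda>(\<psi>, c). ext K v \<psi> c) ` (Fun K \<times> UNIV)"
      using Fun_ext_eq restr_Fun by (intro image_eqI[of _ _ "(restr K \<phi>, \<phi> v)"]) auto
  qed
qed (use ext_Fun in auto)

lemma card_Fun_U: "card (Fun U) = 2 * card (Fun K)"
proof -
  have "inj_on (\<lambda>(\<psi>, c). ext K v \<psi> c) (Fun K \<times> UNIV)"
  proof (rule inj_onI, clarify)
    fix \<psi>1 c1 \<psi>2 c2 assume a: "\<psi>1 \<in> Fun K" "\<psi>2 \<in> Fun K" "ext K v \<psi>1 c1 = ext K v \<psi>2 c2"
    then show "\<psi>1 = \<psi>2 \<and> c1 = c2" using restr_ext[of \<psi>1 c1] restr_ext[of \<psi>2 c2] ext_v[of \<psi>1 c1] ext_v[of \<psi>2 c2]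
      by metis
  qed
  then have "card (Fun U) = card (Fun K \<times> (UNIV::bit set))" unfolding Fun_U_image by (rule card_image)
  also have "\<dots> = card (Fun K) * 2" by (simp add: card_cartesian_product card_bit)
  finally show ?thesis by simp
qed

end


lemma Fun_singleton0: "Fun {0::bit^'n} = {\<lambda>_. 0}"
proof
  show "Fun {0::bit^'n} \<subseteq> {\<lambda>_. 0}"
  proof
    fix \<phi> :: "bit^'n \<Rightarrow> bit" assume a: "\<phi> \<in> Fun {0}"
    have "vec.subspace {0::bit^'n}" by (simp add: subspace_bit)
    then have "\<phi> 0 = 0" using Fun_zero a by blast
    then have "\<phi> = (\<lambda>_. 0)" using Fun_out[OF a] by (metis singletonD)
    then show "\<phi> \<in> {\<lambda>_. 0}" by simp
  qed
qed (simp add: Fun_def)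

lemma span_card_Fun:
  "finite S \<Longrightarrow> vec.independent (S::(bit^'n) set) \<Longrightarrow>
    card (vec.span S) = 2 ^ card S \<and> card (Fun (vec.span S)) = 2 ^ card S"
proof (induction S rule: finite_induct)
  case empty
  then show ?case by (simp add: Fun_singleton0)
next
  case (insert x F)
  then have iF: "vec.independent F" and xF: "x \<notin> vec.span F"
    by (auto simp: vec.independent_insert)
  interpret hsplit "vec.span F" "vec.span (insert x F)" x
    by standard (auto simp: xF span_insert_bit)
  show ?case using insert.IH[OF iF] card_U card_Fun_U insert.hyps by simp
qed

lemma subspace_card:
  assumes "vec.subspace (U::(bit^'n) set)"
  shows "card U = 2 ^ vec.dim U" "card (Fun U) = 2 ^ vec.dim U"
proof -
  obtain B where B: "B \<subseteq> U" "vec.independent B" "U \<subseteq> vec.span B" "card B = vec.dim U"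
    using vec.basis_exists by blast
  have "vec.span B = U" using vec.span_subspace[OF B(1) B(3) assms] .
  then show "card U = 2 ^ vec.dim U" "card (Fun U) = 2 ^ vec.dim U"
    using span_card_Fun[OF _ B(2)] B(4) by auto
qed

lemma dim_of_card:
  assumes "vec.subspace (U::(bit^'n) set)" "card U = 2 ^ N"
  shows "vec.dim U = N"
  using subspace_card(1)[OF assms(1)] assms(2) by simp


definition sg :: "bit \<Rightarrow> int" where "sg b = (if b = 0 then 1 else -1)"

definition Ssum :: "bit^'n \<Rightarrow> (bit^'n) set \<Rightarrow> (bit^'n \<Rightarrow> bit) \<Rightarrow> int" where
  "Ssum x0 B \<phi> = (\<Sum>x\<in>B. sg (\<phi> (x + x0)))"

definition NZ :: "(bit^'n) set \<Rightarrow> bit^'n \<Rightarrow> (bit^'n) set \<Rightarrow> (bit^'n \<Rightarrow> bit) set" where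
  "NZ U x0 B = {\<phi> \<in> Fun U. Ssum x0 B \<phi> \<noteq> 0}"

lemma sg_sum_flip: "sg b + sg (1 + b) = 0"
  using bit_cases2[of b] by (auto simp: sg_def)

lemma Ssum_split:
  "Ssum x0 B \<phi> = int (card {x\<in>B. \<phi> (x + x0) = 0}) - int (card {x\<in>B. \<phi> (x + x0) \<noteq> 0})"
proof -
  have "Ssum x0 B \<phi> = (\<Sum>x\<in>B. if \<phi> (x + x0) = 0 then 1 else -1)"
    by (simp add: Ssum_def sg_def)
  also have "\<dots> = (\<Sum>x\<in>B \<inter> {x. \<phi> (x + x0) = 0}. 1) + (\<Sum>x\<in>B \<inter> - {x. \<phi> (x + x0) = 0}. -1)"
    by (rule sum.If_cases) simp
  also have "B \<inter> {x. \<phi> (x + x0) = 0} = {x\<in>B. \<phi> (x + x0) = 0}" by auto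
  also have "B \<inter> - {x. \<phi> (x + x0) = 0} = {x\<in>B. \<phi> (x + x0) \<noteq> 0}" by auto
  finally show ?thesis by simp
qed

lemma card_B_split:
  "card B = card {x\<in>B. \<phi> (x + x0) = 0} + card {x\<in>B. \<phi> (x + x0) \<noteq> 0}" for B :: "(bit^'n) set"
proof -
  have "B = {x\<in>B. \<phi> (x + x0) = 0} \<union> {x\<in>B. \<phi> (x + x0) \<noteq> 0}" by auto
  then have "card B = card ({x\<in>B. \<phi> (x + x0) = 0} \<union> {x\<in>B. \<phi> (x + x0) \<noteq> 0})" by simp
  also have "\<dots> = card {x\<in>B. \<phi> (x + x0) = 0} + card {x\<in>B. \<phi> (x + x0) \<noteq> 0}"
    by (rule card_Un_disjoint) auto
  finally show ?thesis .
qed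

lemma Ssum_zero_fun: "Ssum x0 B (\<lambda>_. 0) = int (card B)"
  by (simp add: Ssum_def sg_def)

lemma (in hsplit) Ssum_ext_pair:
  assumes psi: "\<psi> \<in> Fun K" and BU: "\<forall>x\<in>B. x + x0 \<in> U"
  shows "Ssum x0 B (ext K v \<psi> 0) + Ssum x0 B (ext K v \<psi> 1) = 2 * Ssum x0 {x\<in>B. x + x0 \<in> K} \<psi>"
proof -
  have "Ssum x0 B (ext K v \<psi> 0) + Ssum x0 B (ext K v \<psi> 1)
      = (\<Sum>x\<in>B. sg (ext K v \<psi> 0 (x + x0)) + sg (ext K v \<psi> 1 (x + x0)))"
    by (simp add: Ssum_def sum.distrib)
  also have "\<dots> = (\<Sum>x\<in>B. if x + x0 \<in> K then 2 * sg (\<psi> (x + x0)) else 0)"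
  proof (rule sum.cong[OF refl])
    fix x assume "x \<in> B"
    then have "x + x0 \<in> U" using BU by blast
    show "sg (ext K v \<psi> 0 (x + x0)) + sg (ext K v \<psi> 1 (x + x0)) =
          (if x + x0 \<in> K then 2 * sg (\<psi> (x + x0)) else 0)"
    proof (cases "x + x0 \<in> K")
      case True then show ?thesis by (simp add: ext_K)
    next
      case False
      then have "x + x0 + v \<in> K" using \<open>x + x0 \<in> U\<close> memU by blast
      then show ?thesis using False sg_sum_flip by (simp add: ext_nK)
    qed
  qed
  also have "\<dots> = (\<Sum>x\<in>{x\<in>B. x + x0 \<in> K}. 2 * sg (\<psi> (x + x0)))"
    by (simp add: sum.inter_filter)
  also have "\<dots> = 2 * Ssum x0 {x\<in>B. x + x0 \<in> K} \<psi>"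
    by (simp add: Ssum_def sum_distrib_left)
  finally show ?thesis .
qed


lemma kernel_split:
  assumes U: "vec.subspace (U::(bit^'n) set)" and phi: "\<phi> \<in> Fun U" and v: "\<phi> v = 1"
  shows "hsplit {u\<in>U. \<phi> u = 0} U v"
proof -
  have vU: "v \<in> U" using Fun_out[OF phi] v by fastforce
  have U0: "0 \<in> U" and Uadd: "\<And>x y. x \<in> U \<Longrightarrow> y \<in> U \<Longrightarrow> x + y \<in> U" using U by (auto simp: subspace_bit)
  show ?thesis
  proof
    show "vec.subspace {u \<in> U. \<phi> u = 0}"
      unfolding subspace_bit using U0 Fun_zero[OF phi U] Uadd Fun_add[OF phi] by auto
    show "v \<notin> {u \<in> U. \<phi> u = 0}" using v by simp
    show "U = {u \<in> U. \<phi> u = 0} \<union> (+) v ` {u \<in> U. \<phi> u = 0}"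
    proof (rule set_eqI)
      fix x
      show "x \<in> U \<longleftrightarrow> x \<in> {u \<in> U. \<phi> u = 0} \<union> (+) v ` {u \<in> U. \<phi> u = 0}"
        unfolding Un_iff mem_trans_iff
      proof
        assume xU: "x \<in> U"
        show "x \<in> {u \<in> U. \<phi> u = 0} \<or> x + v \<in> {u \<in> U. \<phi> u = 0}"
        proof (cases "\<phi> x = 0")
          case False then have "\<phi> x = 1" using bit_cases2 by blast
          then have "\<phi> (x + v) = 0" using Fun_add[OF phi xU vU] v by simp
          then show ?thesis using Uadd[OF xU vU] by simp
        qed (use xU in simp)
      next
        assume "x \<in> {u \<in> U. \<phi> u = 0} \<or> x + v \<in> {u \<in> U. \<phi> u = 0}"
        then show "x \<in> U"
        proof
          assume "x + v \<in> {u \<in> U. \<phi> u = 0}"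
          then have "(x + v) + v \<in> U" using Uadd vU by blast
          then show "x \<in> U" by (simp add: add.assoc)
        qed simp
      qed
    qed
  qed
qed

lemma BB:
  "\<forall>N U B. vec.subspace (U::(bit^'n) set) \<longrightarrow> card U = 2 ^ N \<longrightarrow> (\<forall>x\<in>B. x + x0 \<in> U) \<longrightarrow>
     \<not> 2 ^ t dvd card B \<longrightarrow> 2 ^ (N + 1 - t) \<le> card (NZ U x0 B)"
proof (induction t)
  case 0
  then show ?case by simp
next
  case (Suc t)
  show ?case
  proof (intro allI impI)
    fix N and U B :: "(bit^'n) set"
    assume U: "vec.subspace U" and cU: "card U = 2 ^ N" and BU: "\<forall>x\<in>B. x + x0 \<in> U"
      and nd: "\<not> 2 ^ Suc t dvd card B"
    have cFun: "card (Fun U) = 2 ^ N" using subspace_card[OF U] cU by simp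
    show "2 ^ (N + 1 - Suc t) \<le> card (NZ U x0 B)"
    proof (cases "2 ^ t dvd card B")
      case False
      then have "2 ^ (N + 1 - t) \<le> card (NZ U x0 B)" using Suc.IH U cU BU by blast
      moreover have "(2::nat) ^ (N + 1 - Suc t) \<le> 2 ^ (N + 1 - t)" by (rule power_increasing) auto
      ultimately show ?thesis by linarith
    next
      case dvdt: True
      show ?thesis
      proof (cases "NZ U x0 B = Fun U")
        case True
        then show ?thesis using cFun by (simp add: power_increasing)
      next
        case False
        then obtain \<phi>0 where p0: "\<phi>0 \<in> Fun U" "Ssum x0 B \<phi>0 = 0" by (auto simp: NZ_def)
        have m0: "card B \<noteq> 0" using nd by auto
        have "\<phi>0 \<noteq> (\<lambda>_. 0)" using p0(2) m0 Ssum_zero_fun[of x0 B] by auto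
        then have "\<exists>v. \<phi>0 v \<noteq> 0" by (rule contrapos_np) auto
        then obtain v where "\<phi>0 v \<noteq> 0" by blast
        then have v1: "\<phi>0 v = 1" using bit_cases2 by blast
        define K where "K = {u\<in>U. \<phi>0 u = 0}"
        interpret hsplit K U v unfolding K_def by (rule kernel_split[OF U p0(1) v1])
        have N1: "N \<ge> 1" and cK: "card K = 2 ^ (N - 1)"
        proof -
          have "2 ^ N = 2 * card K" using card_U cU by simp
          then show "N \<ge> 1" by (cases N) auto
          then show "card K = 2 ^ (N - 1)" using \<open>2 ^ N = 2 * card K\<close>
            by (cases N) auto
        qed
        define B' where "B' = {x\<in>B. x + x0 \<in> K}"
        have B'eq: "B' = {x\<in>B. \<phi>0 (x + x0) = 0}" using BU by (auto simp: B'_def K_def)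
        have "card B = 2 * card B'"
          using Ssum_split[of x0 B \<phi>0] card_B_split[of B \<phi>0 x0] p0(2) B'eq by simp
        then have ndB': "\<not> 2 ^ t dvd card B'" using nd by auto
        have B'K: "\<forall>x\<in>B'. x + x0 \<in> K" by (simp add: B'_def)
        have "2 ^ (N - 1 + 1 - t) \<le> card (NZ K x0 B')"
          using Suc.IH K cK B'K ndB' by blast
        also have "card (NZ K x0 B') \<le> card (NZ U x0 B)"
        proof -
          define f where "f \<psi> = (if Ssum x0 B (ext K v \<psi> 0) \<noteq> 0 then ext K v \<psi> 0 else ext K v \<psi> 1)" for \<psi>
          have "inj_on f (NZ K x0 B')"
          proof (rule inj_onI)
            fix \<psi>1 \<psi>2 assume a: "\<psi>1 \<in> NZ K x0 B'" "\<psi>2 \<in> NZ K x0 B'" "f \<psi>1 = f \<psi>2"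
            have "restr K (f \<psi>1) = \<psi>1" "restr K (f \<psi>2) = \<psi>2"
              using a(1,2) restr_ext by (auto simp: f_def NZ_def)
            then show "\<psi>1 = \<psi>2" using a(3) by metis
          qed
          moreover have "f ` NZ K x0 B' \<subseteq> NZ U x0 B"
          proof
            fix \<phi> assume "\<phi> \<in> f ` NZ K x0 B'"
            then obtain \<psi> where ps: "\<psi> \<in> NZ K x0 B'" "\<phi> = f \<psi>" by blast
            then have psF: "\<psi> \<in> Fun K" and psS: "Ssum x0 B' \<psi> \<noteq> 0" by (auto simp: NZ_def)
            have "Ssum x0 B (ext K v \<psi> 0) + Ssum x0 B (ext K v \<psi> 1) = 2 * Ssum x0 B' \<psi>"
              using Ssum_ext_pair[OF psF BU] by (simp add: B'_def)
            then show "\<phi> \<in> NZ U x0 B"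
              using ps(2) psS ext_Fun[OF psF] by (auto simp: f_def NZ_def)
          qed
          ultimately show ?thesis by (rule card_inj_on_le) simp
        qed
        finally show ?thesis using N1 by (simp add: Suc_diff_le)
      qed
    qed
  qed
qed


definition Qf :: "bit^'n \<Rightarrow> (bit^'n) set \<Rightarrow> (bit^'n \<Rightarrow> bit) \<Rightarrow> bit \<Rightarrow> (bit^'n) set" where
  "Qf x0 U \<phi> c = {x. x + x0 \<in> U \<and> \<phi> (x + x0) = c}"

lemma add_twice: "(x::bit^'n) + y + y = x"
  by (simp add: add.assoc)

lemma Qf_sub: "Qf x0 U \<phi> c \<subseteq> (\<lambda>u. x0 + u) ` U"
  by (auto simp: Qf_def mem_trans_iff)

lemma Qf_flat:
  assumes U: "vec.subspace (U::(bit^'n) set)" and cU: "card U = 2 ^ (d + 1)"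
    and phi: "\<phi> \<in> Fun U" and nz: "\<phi> \<noteq> (\<lambda>_. 0)"
  shows "Qf x0 U \<phi> c \<in> flats d"
proof -
  have "\<exists>v. \<phi> v \<noteq> 0" using nz by (rule contrapos_np) auto
  then obtain v where "\<phi> v \<noteq> 0" by blast
  then have v1: "\<phi> v = 1" using bit_cases2 by blast
  define K where "K = {u\<in>U. \<phi> u = 0}"
  interpret hsplit K U v unfolding K_def by (rule kernel_split[OF U phi v1])
  have cK: "card K = 2 ^ d" using card_U cU by simp
  have dK: "vec.dim K = d" by (rule dim_of_card[OF K cK])
  show ?thesis
  proof (cases "c = 0")
    case True
    have "Qf x0 U \<phi> c = (\<lambda>u. x0 + u) ` K"
      by (auto simp: Qf_def mem_trans_iff True K_def)
    then show ?thesis unfolding flats_def using K dK by blast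
  next
    case False
    then have c1: "c = 1" using bit_cases2 by blast
    have "Qf x0 U \<phi> c = (\<lambda>u. (x0 + v) + u) ` K"
    proof (rule set_eqI)
      fix x
      have "x \<in> Qf x0 U \<phi> c \<longleftrightarrow> x + x0 \<in> U \<and> x + x0 \<notin> K"
        using c1 bit_cases2 by (auto simp: Qf_def K_def)
      also have "\<dots> \<longleftrightarrow> x + x0 + v \<in> K" using memU not_both by blast
      also have "\<dots> \<longleftrightarrow> x \<in> (\<lambda>u. (x0 + v) + u) ` K" unfolding mem_trans_iff by (simp add: add.assoc)
      finally show "x \<in> Qf x0 U \<phi> c \<longleftrightarrow> x \<in> (\<lambda>u. (x0 + v) + u) ` K" .
    qed
    then show ?thesis unfolding flats_def using K dK by blast
  qed
qed

lemma Qf_inj: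
  assumes U: "vec.subspace (U::(bit^'n) set)" and phi: "\<phi> \<in> Fun U" and phi': "\<phi>' \<in> Fun U"
    and eq: "Qf x0 U \<phi> c = Qf x0 U \<phi>' c'"
  shows "\<phi> = \<phi>' \<and> c = c'"
proof -
  have key: "\<phi> u = c \<longleftrightarrow> \<phi>' u = c'" if "u \<in> U" for u
  proof -
    have "u + x0 \<in> Qf x0 U \<phi> c \<longleftrightarrow> u + x0 \<in> Qf x0 U \<phi>' c'" using eq by simp
    then show ?thesis using that by (simp add: Qf_def add_twice)
  qed
  have "0 \<in> U" using U by (simp add: subspace_bit)
  then have "(c = 0) = (c' = 0)" using key[of 0] Fun_zero[OF phi U] Fun_zero[OF phi' U] by simp
  then have cc: "c = c'" using bit_cases2[of c] bit_cases2[of c'] by auto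
  have "\<phi> x = \<phi>' x" for x
  proof (cases "x \<in> U")
    case True
    then show ?thesis using key[OF True] cc bit_cases2 by (metis add_cancel_right_left bit_add_self')
  next
    case False
    then show ?thesis using Fun_out[OF phi] Fun_out[OF phi'] by simp
  qed
  then show ?thesis using cc by auto
qed

lemma flat_card:
  assumes "Q \<in> flats d"
  shows "card (Q::(bit^'n) set) = 2 ^ d"
proof -
  obtain q K where Q: "Q = (\<lambda>u. q + u) ` K" "vec.subspace K" "vec.dim K = d"
    using assms unfolding flats_def by blast
  have "card Q = card K" unfolding Q(1) by (rule card_image) (auto simp: inj_on_def)
  then show ?thesis using subspace_card(1)[OF Q(2)] Q(3) by simp
qed

lemma Qf_surj:
  assumes U: "vec.subspace (U::(bit^'n) set)" and cU: "card U = 2 ^ (d + 1)"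
    and Q: "Q \<in> flats d" and QR: "Q \<subseteq> (\<lambda>u. x0 + u) ` U"
  shows "\<exists>\<phi>\<in>Fun U. \<phi> \<noteq> (\<lambda>_. 0) \<and> (\<exists>c. Q = Qf x0 U \<phi> c)"
proof -
  obtain q K where Qe: "Q = (\<lambda>u. q + u) ` K" and K: "vec.subspace K" and dK: "vec.dim K = d"
    using Q unfolding flats_def by blast
  have cK: "card K = 2 ^ d" using subspace_card(1)[OF K] dK by simp
  have K0: "0 \<in> K" and Kadd: "\<And>x y. x \<in> K \<Longrightarrow> y \<in> K \<Longrightarrow> x + y \<in> K" using K by (auto simp: subspace_bit)
  have U0: "0 \<in> U" and Uadd: "\<And>x y. x \<in> U \<Longrightarrow> y \<in> U \<Longrightarrow> x + y \<in> U" using U by (auto simp: subspace_bit)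
  have memQ: "x \<in> Q \<longleftrightarrow> x + q \<in> K" for x unfolding Qe by (rule mem_trans_iff)
  have memR: "x \<in> (\<lambda>u. x0 + u) ` U \<longleftrightarrow> x + x0 \<in> U" for x by (rule mem_trans_iff)
  have qU: "q + x0 \<in> U" using QR memQ[of q] K0 memR by auto
  have KU: "K \<subseteq> U"
  proof
    fix k assume "k \<in> K"
    have "q + k \<in> Q" using memQ[of "q + k"] \<open>k \<in> K\<close> by (simp add: add.commute add_twice)
    then have "q + k + x0 \<in> U" using QR memR by blast
    then have "(q + k + x0) + (q + x0) \<in> U" using Uadd qU by blast
    moreover have "(q + k + x0) + (q + x0) = k" by (simp add: vec_eq_iff ac_simps)
    ultimately show "k \<in> U" by simp
  qed
  have "K \<noteq> U" using cK cU by auto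
  then obtain v where vinU: "v \<in> U" and vK: "v \<notin> K" using KU by blast
  define V where "V = K \<union> (\<lambda>x. v + x) ` K"
  interpret hsplit K V v by unfold_locales (simp_all add: K vK V_def)
  have "V \<subseteq> U" using KU vinU Uadd by (auto simp: V_def)
  moreover have "card V = card U" using card_U cK cU by simp
  ultimately have VU: "V = U" by (simp add: card_subset_eq)
  define \<phi> where "\<phi> = ext K v (\<lambda>_. 0) 1"
  have zF: "(\<lambda>_. 0) \<in> Fun K" by (simp add: Fun_def)
  have phiF: "\<phi> \<in> Fun U" using ext_Fun[OF zF] VU by (simp add: \<phi>_def)
  have phiv: "\<phi> v = 1" using ext_v[OF zF] by (simp add: \<phi>_def)
  have phi0: "y \<in> U \<Longrightarrow> \<phi> y = 0 \<longleftrightarrow> y \<in> K" for y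
    using VU memU not_both by (auto simp: \<phi>_def ext_def)
  have "Q = Qf x0 U \<phi> (\<phi> (q + x0))"
  proof (rule set_eqI)
    fix x
    show "x \<in> Q \<longleftrightarrow> x \<in> Qf x0 U \<phi> (\<phi> (q + x0))"
    proof
      assume "x \<in> Q"
      then have xK: "x + q \<in> K" using memQ by blast
      then have "x + q \<in> U" using KU by blast
      have e: "(x + q) + (q + x0) = x + x0" by (simp add: vec_eq_iff ac_simps)
      then have xU: "x + x0 \<in> U" using Uadd[OF \<open>x + q \<in> U\<close> qU] by simp
      have "\<phi> (x + x0) = \<phi> (x + q) + \<phi> (q + x0)"
        using Fun_add[OF phiF \<open>x + q \<in> U\<close> qU] e by simp
      then show "x \<in> Qf x0 U \<phi> (\<phi> (q + x0))" using xK phi0 xU KU by (auto simp: Qf_def)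
    next
      assume "x \<in> Qf x0 U \<phi> (\<phi> (q + x0))"
      then have xU: "x + x0 \<in> U" and ph: "\<phi> (x + x0) = \<phi> (q + x0)" by (auto simp: Qf_def)
      have e: "(x + x0) + (q + x0) = x + q" by (simp add: vec_eq_iff ac_simps)
      have xqU: "x + q \<in> U" using Uadd[OF xU qU] e by simp
      have "\<phi> (x + q) = \<phi> (x + x0) + \<phi> (q + x0)" using Fun_add[OF phiF xU qU] e by simp
      then have "\<phi> (x + q) = 0" using ph by simp
      then show "x \<in> Q" using phi0[OF xqU] memQ by blast
    qed
  qed
  moreover have "\<phi> \<noteq> (\<lambda>_. 0)" using phiv by auto
  ultimately show ?thesis using phiF by blast
qed


lemma per_R:
  assumes U: "vec.subspace (U::(bit^'n) set)" and cU: "card U = 2 ^ (d + 1)"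
    and sj: "s = j * 2 ^ k" and oj: "odd j"
  shows "card {Q \<in> flats d. Q \<subseteq> (\<lambda>u. x0 + u) ` U} = 2 * (2 ^ (d + 1) - 1)"
    and "card {Q \<in> flats d. Q \<subseteq> (\<lambda>u. x0 + u) ` U \<and> card (Q \<inter> A) = s} \<le> 2 * (2 ^ (d + 1) - 2 ^ (d - k))"
proof -
  define P where "P = (Fun U - {\<lambda>_. 0}) \<times> (UNIV::bit set)"
  define h where "h = (\<lambda>(\<phi>, c). Qf x0 U \<phi> c)"
  define Sub where "Sub = {Q \<in> flats d. Q \<subseteq> (\<lambda>u. x0 + u) ` U}"
  have cFun: "card (Fun U) = 2 ^ (d + 1)" using subspace_card[OF U] cU by simp
  have z: "(\<lambda>_. 0) \<in> Fun U" by (simp add: Fun_def)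
  have cP: "card P = 2 * (2 ^ (d + 1) - 1)"
    unfolding P_def using cFun z by (simp add: card_cartesian_product card_bit card_Diff_singleton)
  have inj: "inj_on h P"
    by (rule inj_onI) (use Qf_inj[OF U] in \<open>auto simp: h_def P_def\<close>)
  have img: "h ` P = Sub"
  proof
    show "h ` P \<subseteq> Sub"
    proof
      fix Q assume "Q \<in> h ` P"
      then obtain \<phi> c where "\<phi> \<in> Fun U" "\<phi> \<noteq> (\<lambda>_. 0)" "Q = Qf x0 U \<phi> c"
        by (auto simp: h_def P_def)
      then show "Q \<in> Sub" using Qf_flat[OF U cU] Qf_sub[of x0 U \<phi> c] by (simp add: Sub_def)
    qed
    show "Sub \<subseteq> h ` P"
    proof
      fix Q assume "Q \<in> Sub"
      then obtain \<phi> c where "\<phi> \<in> Fun U" "\<phi> \<noteq> (\<lambda>_. 0)" "Q = Qf x0 U \<phi> c"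
        using Qf_surj[OF U cU] unfolding Sub_def by blast
      then show "Q \<in> h ` P" unfolding h_def P_def by (intro image_eqI[of _ _ "(\<phi>, c)"]) auto
    qed
  qed
  show "card {Q \<in> flats d. Q \<subseteq> (\<lambda>u. x0 + u) ` U} = 2 * (2 ^ (d + 1) - 1)"
    using card_image[OF inj] img cP by (simp add: Sub_def)
  define G where "G = {p\<in>P. card (h p \<inter> A) = s}"
  have "{Q \<in> flats d. Q \<subseteq> (\<lambda>u. x0 + u) ` U \<and> card (Q \<inter> A) = s} = h ` G"
  proof
    show "h ` G \<subseteq> {Q \<in> flats d. Q \<subseteq> (\<lambda>u. x0 + u) ` U \<and> card (Q \<inter> A) = s}"
      using img by (auto simp: G_def Sub_def)
    show "{Q \<in> flats d. Q \<subseteq> (\<lambda>u. x0 + u) ` U \<and> card (Q \<inter> A) = s} \<subseteq> h ` G"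
    proof
      fix Q assume a: "Q \<in> {Q \<in> flats d. Q \<subseteq> (\<lambda>u. x0 + u) ` U \<and> card (Q \<inter> A) = s}"
      then have "Q \<in> h ` P" using img by (simp add: Sub_def)
      then obtain p where "p \<in> P" "Q = h p" by blast
      then show "Q \<in> h ` G" using a by (auto simp: G_def)
    qed
  qed
  moreover have "inj_on h G" using inj by (rule inj_on_subset) (auto simp: G_def)
  ultimately have cG: "card {Q \<in> flats d. Q \<subseteq> (\<lambda>u. x0 + u) ` U \<and> card (Q \<inter> A) = s} = card G"
    by (simp add: card_image)
  define B where "B = (\<lambda>u. x0 + u) ` U \<inter> A"
  have BU: "\<forall>x\<in>B. x + x0 \<in> U" by (auto simp: B_def mem_trans_iff)
  have a0: "Qf x0 U \<phi> 0 \<inter> A = {x\<in>B. \<phi> (x + x0) = 0}" for \<phi>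
    by (auto simp: Qf_def B_def mem_trans_iff)
  have a1: "Qf x0 U \<phi> 1 \<inter> A = {x\<in>B. \<phi> (x + x0) \<noteq> 0}" for \<phi>
    by (auto simp: Qf_def B_def mem_trans_iff)
  have sumB: "card (Qf x0 U \<phi> 0 \<inter> A) + card (Qf x0 U \<phi> 1 \<inter> A) = card B" for \<phi>
    using card_B_split[of B \<phi> x0] a0 a1 by simp
  show "card {Q \<in> flats d. Q \<subseteq> (\<lambda>u. x0 + u) ` U \<and> card (Q \<inter> A) = s} \<le> 2 * (2 ^ (d + 1) - 2 ^ (d - k))"
    unfolding cG
  proof (cases "card B = 2 * s")
    case False
    have "inj_on fst G"
    proof (rule inj_onI)
      fix p1 p2 assume a: "p1 \<in> G" "p2 \<in> G" "fst p1 = fst p2"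
      obtain \<phi> c1 c2 where p: "p1 = (\<phi>, c1)" "p2 = (\<phi>, c2)" using a(3) by (cases p1, cases p2) auto
      show "p1 = p2"
      proof (rule ccontr)
        assume "p1 \<noteq> p2"
        then have "c1 \<noteq> c2" using p by simp
        then have "{c1, c2} = {0, 1}" using bit_cases2[of c1] bit_cases2[of c2] by auto
        moreover have "card (Qf x0 U \<phi> c1 \<inter> A) = s" "card (Qf x0 U \<phi> c2 \<inter> A) = s"
          using a(1,2) p by (auto simp: G_def h_def)
        ultimately have "card (Qf x0 U \<phi> 0 \<inter> A) = s \<and> card (Qf x0 U \<phi> 1 \<inter> A) = s"
          by (metis doubleton_eq_iff)
        then show False using sumB[of \<phi>] False by simp
      qed
    qed
    moreover have "fst ` G \<subseteq> Fun U - {\<lambda>_. 0}" by (auto simp: G_def P_def)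
    ultimately have "card G \<le> card (Fun U - {\<lambda>_. 0})" by (rule card_inj_on_le) simp
    also have "\<dots> = 2 ^ (d + 1) - 1" using cFun z by (simp add: card_Diff_singleton)
    also have "\<dots> \<le> 2 * (2 ^ (d + 1) - 2 ^ (d - k))"
    proof -
      have "(2::nat) ^ (d - k) \<le> 2 ^ d" by (rule power_increasing) auto
      moreover have "(2::nat) ^ (d + 1) = 2 * 2 ^ d" by simp
      ultimately show ?thesis by linarith
    qed
    finally show "card G \<le> 2 * (2 ^ (d + 1) - 2 ^ (d - k))" .
  next
    case True
    have "G \<subseteq> (Fun U - NZ U x0 B) \<times> UNIV"
    proof
      fix p assume "p \<in> G"
      then obtain \<phi> c where p: "p = (\<phi>, c)" "\<phi> \<in> Fun U" "card (Qf x0 U \<phi> c \<inter> A) = s"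
        by (auto simp: G_def P_def h_def)
      have "card (Qf x0 U \<phi> 0 \<inter> A) = s \<and> card (Qf x0 U \<phi> 1 \<inter> A) = s"
        using sumB[of \<phi>] True p(3) bit_cases2[of c] by auto
      then have "Ssum x0 B \<phi> = 0" using Ssum_split[of x0 B \<phi>] a0 a1 by simp
      then show "p \<in> (Fun U - NZ U x0 B) \<times> UNIV" using p by (simp add: NZ_def)
    qed
    then have "card G \<le> card ((Fun U - NZ U x0 B) \<times> (UNIV::bit set))" by (rule card_mono[rotated]) simp
    also have "\<dots> = 2 * (card (Fun U) - card (NZ U x0 B))"
      by (simp add: card_cartesian_product card_bit card_Diff_subset NZ_def)
    also have "2 ^ (d - k) \<le> card (NZ U x0 B)"
    proof -
      have "\<not> 2 ^ (k + 2) dvd card B"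
      proof
        assume "2 ^ (k + 2) dvd card B"
        moreover have "card B = 2 ^ (k + 1) * j" using True sj by simp
        moreover have "(2::nat) ^ (k + 2) = 2 ^ (k + 1) * 2" by simp
        ultimately have "2 ^ (k + 1) * 2 dvd 2 ^ (k + 1) * j" by metis
        then have "2 dvd j" using nat_mult_dvd_cancel1[of "2 ^ (k + 1)" 2 j] by simp
        then show False using oj by simp
      qed
      then have "2 ^ (d + 1 + 1 - (k + 2)) \<le> card (NZ U x0 B)" using BB U cU BU by blast
      then show ?thesis by simp
    qed
    then have "2 * (card (Fun U) - card (NZ U x0 B)) \<le> 2 * (2 ^ (d + 1) - 2 ^ (d - k))"
      using cFun by simp
    finally show "card G \<le> 2 * (2 ^ (d + 1) - 2 ^ (d - k))" .
  qed
qed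


lemma card_UNIV_vec: "card (UNIV::(bit^'n) set) = 2 ^ CARD('n)"
  using span_card_Fun[OF finite_cart_basis independent_cart_basis] card_cart_basis
  by (metis span_cart_basis)

lemma repoint:
  assumes "q \<in> (\<lambda>u. r + u) ` V" "vec.subspace (V::(bit^'n) set)"
  shows "(\<lambda>u. r + u) ` V = (\<lambda>u. q + u) ` V"
proof (rule set_eqI)
  fix x
  have qr: "q + r \<in> V" using assms(1) mem_trans_iff by blast
  have Vadd: "\<And>a b. a \<in> V \<Longrightarrow> b \<in> V \<Longrightarrow> a + b \<in> V" using assms(2) by (auto simp: subspace_bit)
  have e1: "(x + r) + (q + r) = x + q" and e2: "(x + q) + (q + r) = x + r" by (simp_all add: vec_eq_iff ac_simps)
  show "x \<in> (\<lambda>u. r + u) ` V \<longleftrightarrow> x \<in> (\<lambda>u. q + u) ` V"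
    unfolding mem_trans_iff using Vadd[OF _ qr] e1 e2 by metis
qed

lemma count_super:
  assumes Q: "(Q::(bit^'n) set) \<in> flats d"
  shows "card {R \<in> flats (d + 1). Q \<subseteq> R} * 2 ^ d = 2 ^ CARD('n) - 2 ^ d"
proof -
  obtain q K where Qe: "Q = (\<lambda>u. q + u) ` (K::(bit^'n) set)" and K: "vec.subspace K" and dK: "vec.dim K = d"
    using Q unfolding flats_def by blast
  have cK: "card K = 2 ^ d" using subspace_card(1)[OF K] dK by simp
  have K0: "0 \<in> K" and Kadd: "\<And>x y. x \<in> K \<Longrightarrow> y \<in> K \<Longrightarrow> x + y \<in> K" using K by (auto simp: subspace_bit)
  define W where "W = UNIV - K"
  define g where "g w = Q \<union> (\<lambda>x. w + x) ` Q" for w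
  have gw: "g w = (\<lambda>u. q + u) ` (K \<union> (\<lambda>x. w + x) ` K)" for w
  proof (rule set_eqI)
    fix x
    have e: "x + w + q = x + q + w" by (simp add: ac_simps)
    show "x \<in> g w \<longleftrightarrow> x \<in> (\<lambda>u. q + u) ` (K \<union> (\<lambda>x. w + x) ` K)"
      unfolding g_def Un_iff mem_trans_iff Qe using e by (simp only:)
  qed
  have gflat: "g w \<in> flats (d + 1) \<and> Q \<subseteq> g w" if "w \<in> W" for w
  proof -
    interpret hsplit K "K \<union> (\<lambda>x. w + x) ` K" w using K that by unfold_locales (auto simp: W_def)
    have "vec.dim (K \<union> (\<lambda>x. w + x) ` K) = d + 1"
      using dim_of_card[OF subspace_U] card_U cK by simp
    then have "g w \<in> flats (d + 1)" unfolding gw flats_def using subspace_U by blast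
    then show ?thesis by (simp add: g_def)
  qed
  define Rs where "Rs = {R \<in> flats (d + 1). Q \<subseteq> R}"
  have fiber: "{w \<in> W. g w = R} = V - K \<and> K \<subseteq> V \<and> card V = 2 ^ (d + 1)"
    if R: "R = (\<lambda>u. q + u) ` V" "vec.subspace V" "vec.dim V = d + 1" and QR: "Q \<subseteq> R" for R V
  proof -
    have cV: "card V = 2 ^ (d + 1)" using subspace_card(1)[OF R(2)] R(3) by simp
    have Vadd: "\<And>x y. x \<in> V \<Longrightarrow> y \<in> V \<Longrightarrow> x + y \<in> V" using R(2) by (auto simp: subspace_bit)
    have KV: "K \<subseteq> V"
    proof
      fix k assume "k \<in> K"
      then have "k + q \<in> Q" unfolding Qe mem_trans_iff by (simp add: add_twice)
      then have "k + q \<in> R" using QR by blast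
      then show "k \<in> V" unfolding R(1) mem_trans_iff by (simp add: add_twice)
    qed
    have "{w \<in> W. g w = R} = V - K"
    proof (rule set_eqI, rule iffI)
      fix w assume "w \<in> {w \<in> W. g w = R}"
      then have wK: "w \<notin> K" and gR: "g w = R" by (auto simp: W_def)
      have "w \<in> K \<union> (\<lambda>x. w + x) ` K" using K0 by (simp add: mem_trans_iff)
      then have "q + w \<in> g w" unfolding gw by blast
      then have "q + w \<in> R" using gR by simp
      then have "w \<in> V" unfolding R(1) mem_trans_iff by (simp add: ac_simps)
      then show "w \<in> V - K" using wK by simp
    next
      fix w assume w: "w \<in> V - K"
      interpret hsplit K "K \<union> (\<lambda>x. w + x) ` K" w using K w by unfold_locales auto
      have "K \<union> (\<lambda>x. w + x) ` K \<subseteq> V" using KV w Vadd by auto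
      moreover have "card (K \<union> (\<lambda>x. w + x) ` K) = card V" using card_U cK cV by simp
      ultimately have "K \<union> (\<lambda>x. w + x) ` K = V" by (simp add: card_subset_eq)
      then have "g w = R" unfolding gw R(1) by simp
      then show "w \<in> {w \<in> W. g w = R}" using w by (simp add: W_def)
    qed
    then show ?thesis using KV cV by simp
  qed
  have img: "g ` W = Rs"
  proof
    show "g ` W \<subseteq> Rs" using gflat by (auto simp: Rs_def)
    show "Rs \<subseteq> g ` W"
    proof
      fix R assume "R \<in> Rs"
      then have Rf: "R \<in> flats (d + 1)" and QR: "Q \<subseteq> R" by (auto simp: Rs_def)
      obtain r V where R: "R = (\<lambda>u. r + u) ` V" "vec.subspace V" "vec.dim V = d + 1"
        using Rf unfolding flats_def by blast
      have "q \<in> Q" unfolding Qe using K0 by (simp add: mem_trans_iff)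
      then have R': "R = (\<lambda>u. q + u) ` V" using repoint[of q r V] R QR by blast
      have f: "{w \<in> W. g w = R} = V - K" "K \<subseteq> V" "card V = 2 ^ (d + 1)"
        using fiber[OF R' R(2,3) QR] by auto
      have "card (V - K) = 2 ^ d" using f(2,3) cK by (simp add: card_Diff_subset)
      then have "V - K \<noteq> {}" by (metis card.empty power_not_zero zero_neq_numeral)
      then obtain w where "w \<in> {w \<in> W. g w = R}" using f(1) by blast
      then show "R \<in> g ` W" by blast
    qed
  qed
  have fcard: "card {w \<in> W. g w = R} = 2 ^ d" if "R \<in> Rs" for R
  proof -
    from that have Rf: "R \<in> flats (d + 1)" and QR: "Q \<subseteq> R" by (auto simp: Rs_def)
    obtain r V where R: "R = (\<lambda>u. r + u) ` V" "vec.subspace V" "vec.dim V = d + 1"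
      using Rf unfolding flats_def by blast
    have "q \<in> Q" unfolding Qe using K0 by (simp add: mem_trans_iff)
    then have R': "R = (\<lambda>u. q + u) ` V" using repoint[of q r V] R QR by blast
    have f: "{w \<in> W. g w = R} = V - K" "K \<subseteq> V" "card V = 2 ^ (d + 1)"
      using fiber[OF R' R(2,3) QR] by auto
    then show ?thesis using cK by (simp add: card_Diff_subset)
  qed
  have "card W = (\<Sum>R\<in>g ` W. card {w \<in> W. g w = R})"
    using sum.image_gen[of W "\<lambda>_. 1::nat" g] by simp
  also have "\<dots> = card Rs * 2 ^ d" using img fcard by simp
  finally have "card Rs * 2 ^ d = card W" by simp
  also have "card W = 2 ^ CARD('n) - 2 ^ d" unfolding W_def
    using cK by (simp add: card_Diff_subset card_bit)
  finally show ?thesis by (simp add: Rs_def)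
qed


lemma double_count:
  fixes S T :: "'a set set"
  assumes "finite S" "finite T"
  shows "(\<Sum>Q\<in>S. card {R\<in>T. Q \<subseteq> R}) = (\<Sum>R\<in>T. card {Q\<in>S. Q \<subseteq> R})"
proof -
  have "(\<Sum>Q\<in>S. card {R\<in>T. Q \<subseteq> R}) = (\<Sum>Q\<in>S. \<Sum>R\<in>T. if Q \<subseteq> R then 1 else 0)"
    using assms by (simp add: sum.If_cases Int_def conj_commute)
  also have "\<dots> = (\<Sum>R\<in>T. \<Sum>Q\<in>S. if Q \<subseteq> R then 1 else 0)" by (rule sum.swap)
  also have "\<dots> = (\<Sum>R\<in>T. card {Q\<in>S. Q \<subseteq> R})"
    using assms by (simp add: sum.If_cases Int_def conj_commute)
  finally show ?thesis .
qed

theorem proposition3p2: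
  fixes d s j k :: nat and A :: "(bit ^ 'n) set"
  assumes "d \<ge> 1" and "1 < s" and "s < 2 ^ d"
    and "s = j * 2 ^ k" and "odd j"
    and "CARD('n) \<ge> d + 1"
  shows "lambda_star d s A \<le> 1 - ((2::real) ^ (d - k) - 1) / ((2::real) ^ (d + 1) - 1)"
proof -
  define F where "F = (flats d :: ((bit^'n) set) set)"
  define Gd where "Gd = (flats (d + 1) :: ((bit^'n) set) set)"
  define Good where "Good = {Q \<in> F. card (Q \<inter> A) = s}"
  define c0 where "c0 = 2 ^ (CARD('n) - d) - (1::nat)"
  define X where "X = (2 ^ (d + 1) - 2 ^ (d - k) :: nat)"
  define Y where "Y = (2 ^ (d + 1) - 1 :: nat)"
  have finF: "finite F" and finG: "finite Gd" by simp_all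
  have c0pos: "c0 \<ge> 1"
  proof -
    have "(2::nat) ^ 1 \<le> 2 ^ (CARD('n) - d)" by (rule power_increasing) (use assms(6) in auto)
    then show ?thesis by (simp add: c0_def)
  qed
  have cs: "card {R \<in> Gd. Q \<subseteq> R} = c0" if "Q \<in> F" for Q
  proof -
    have "card {R \<in> Gd. Q \<subseteq> R} * 2 ^ d = 2 ^ CARD('n) - 2 ^ d"
      using count_super[of Q d] that by (simp add: F_def Gd_def)
    also have "(2::nat) ^ CARD('n) = 2 ^ (CARD('n) - d) * 2 ^ d"
      using assms(6) by (simp add: power_add[symmetric])
    also have "2 ^ (CARD('n) - d) * 2 ^ d - 2 ^ d = c0 * (2::nat) ^ d"
      by (simp add: c0_def diff_mult_distrib)
    finally show ?thesis by simp
  qed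
  have Rfacts: "card {Q \<in> F. Q \<subseteq> R} = 2 * Y \<and> card {Q \<in> Good. Q \<subseteq> R} \<le> 2 * X" if RG: "R \<in> Gd" for R
  proof -
    obtain x0 U where R: "R = (\<lambda>u. x0 + u) ` U" "vec.subspace U" "vec.dim U = d + 1"
      using RG unfolding Gd_def flats_def by blast
    have cU: "card U = 2 ^ (d + 1)" using subspace_card(1)[OF R(2)] R(3) by simp
    have "{Q \<in> Good. Q \<subseteq> R} = {Q \<in> flats d. Q \<subseteq> (\<lambda>u. x0 + u) ` U \<and> card (Q \<inter> A) = s}"
      by (auto simp: Good_def F_def R(1))
    then show ?thesis using per_R(1)[OF R(2) cU assms(4,5), of x0] per_R(2)[OF R(2) cU assms(4,5), of x0 A] by (simp add: F_def R(1) X_def Y_def)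
  qed
  have eqF: "card F * c0 = card Gd * (2 * Y)"
  proof -
    have "card F * c0 = (\<Sum>Q\<in>F. card {R \<in> Gd. Q \<subseteq> R})" using cs by simp
    also have "\<dots> = (\<Sum>R\<in>Gd. card {Q\<in>F. Q \<subseteq> R})" by (rule double_count[OF finF finG])
    also have "\<dots> = card Gd * (2 * Y)" using Rfacts by simp
    finally show ?thesis .
  qed
  have leG: "card Good * c0 \<le> card Gd * (2 * X)"
  proof -
    have GF: "Good \<subseteq> F" by (auto simp: Good_def)
    have "(\<Sum>Q\<in>Good. card {R \<in> Gd. Q \<subseteq> R}) = (\<Sum>Q\<in>Good. c0)"
      by (rule sum.cong[OF refl]) (use cs GF in blast)
    then have "card Good * c0 = (\<Sum>Q\<in>Good. card {R \<in> Gd. Q \<subseteq> R})" by simp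
    also have "\<dots> = (\<Sum>R\<in>Gd. card {Q\<in>Good. Q \<subseteq> R})" by (rule double_count) (use finG in simp_all)
    also have "\<dots> \<le> (\<Sum>R\<in>Gd. 2 * X)" by (rule sum_mono) (use Rfacts in blast)
    also have "\<dots> = card Gd * (2 * X)" by simp
    finally show ?thesis .
  qed
  have pk: "(2::nat) ^ (d - k) \<le> 2 ^ (d + 1)" by (rule power_increasing) auto
  have Y1: "(1::nat) \<le> 2 ^ (d + 1)" by simp
  have Yr: "real Y = 2 ^ (d + 1) - 1" using Y1 by (simp add: Y_def of_nat_diff)
  have Ypos: "real Y > 0"
  proof -
    have "(1::real) \<le> 2 ^ d" by simp
    then have "(1::real) < 2 * 2 ^ d" by linarith
    then show ?thesis using Yr by simp
  qed
  have Xr: "real X = real Y - (2 ^ (d - k) - 1)"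
    using pk by (simp add: X_def Yr of_nat_diff)
  have rhs: "1 - ((2::real) ^ (d - k) - 1) / ((2::real) ^ (d + 1) - 1) = real X / real Y"
    using Ypos by (simp add: Xr Yr field_simps)
  have lam: "lambda_star d s A = real (card Good) / real (card F)"
    by (simp add: lambda_star_def Good_def F_def)
  show ?thesis
  proof (cases "card F = 0")
    case True
    have "real X \<ge> 0" by simp
    then show ?thesis unfolding rhs lam using True Ypos by simp
  next
    case False
    have "card Good * c0 * Y \<le> card Gd * (2 * X) * Y" using leG by (rule mult_right_mono) simp
    then have "real (card Good * c0 * Y) \<le> real (card Gd * (2 * X) * Y)" by (rule of_nat_mono)
    then have "real (card Good) * real c0 * real Y \<le> real (card Gd) * (2 * real X) * real Y"
      by simp
    also have "\<dots> = real X * (real (card F) * real c0)"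
    proof -
      have "real (card F * c0) = real (card Gd * (2 * Y))" using eqF by simp
      then have "real (card F) * real c0 = real (card Gd) * (2 * real Y)" by simp
      then show ?thesis by (simp add: algebra_simps)
    qed
    finally have "real (card Good) * real Y * real c0 \<le> real X * real (card F) * real c0"
      by (simp add: algebra_simps)
    then have "real (card Good) * real Y \<le> real X * real (card F)"
      using c0pos by simp
    then have "real (card Good) / real (card F) \<le> real X / real Y"
      using False Ypos by (simp add: divide_simps)
    then show ?thesis unfolding rhs lam .
  qed
qed

end
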